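(* Let $q$ be a prime power, $\xi$ a generator of $\mathbb{F}_q^*$, and let $u=(\xi^a,\xi^b,\xi^c)$ and $v=(\xi^d,\xi^e,\xi^f)$ be elements of $\mathcal{D}_q$ (exponents in $\mathbb{Z}_{q-1}$). Let $M=\{\xi^{a-d},\xi^{b-e},\xi^{c-f}\}\subseteq\mathbb{F}_q^*$ (as a set, so repeated values are counted once). Then \[\rho_q(u,v)=\sum_{\mu\in M}|\widetilde{B}(u)\cap\widetilde{B}(\mu v)|.\]
   Context: $\mathbb{F}_q$ is the finite field with $q$ elements. Hamming distance $d(u,v)=|\{i:u_i\ne v_i\}|$ on $\mathbb{F}_q^3$; $B(u)=\{v:d(u,v)\le1\}$; $E(u)=\bigcup_{\lambda\in\mathbb{F}_q}B(\lambda u)$. $\mathcal{D}_q=\{(u_1,u_2,u_3)\in\mathbb{F}_q^3: u_1,u_2,u_3 \text{ pairwise distinct and nonzero}\}$, $\widetilde{B}(u)=B(u)\cap\mathcal{D}_q$, $\widetilde{E}(u)=E(u)\cap\mathcal{D}_q$. For $u,v\in\mathbb{F}_q^3$, $\rho_q(u,v)=0$ if $|\widetilde{E}(u)|=0$ or $|\widetilde{E}(v)|=0$, and otherwise $\rho_q(u,v)=\sum_{\mu\in\mathbb{F}_q^*}|\widetilde{B}(u)\cap\widetilde{B}(\mu v)|$. *)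

theory Defs
  imports Main
begin

definition comp3 :: "'a \<times> 'a \<times> 'a \<Rightarrow> nat \<Rightarrow> 'a" where
  "comp3 u i = (case u of (x, y, z) \<Rightarrow> (if i = 0 then x else if i = 1 then y else z))"

definition hamming :: "'a \<times> 'a \<times> 'a \<Rightarrow> 'a \<times> 'a \<times> 'a \<Rightarrow> nat" where
  "hamming u v = card {i::nat. i < 3 \<and> comp3 u i \<noteq> comp3 v i}"

definition ball1 :: "'a \<times> 'a \<times> 'a \<Rightarrow> ('a \<times> 'a \<times> 'a) set" where
  "ball1 u = {v. hamming u v \<le> 1}"

definition smul3 :: "'a::times \<Rightarrow> 'a \<times> 'a \<times> 'a \<Rightarrow> 'a \<times> 'a \<times> 'a" where
  "smul3 l u = (case u of (x, y, z) \<Rightarrow> (l * x, l * y, l * z))"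

definition Eset :: "'a::times \<times> 'a \<times> 'a \<Rightarrow> ('a \<times> 'a \<times> 'a) set" where
  "Eset u = (\<Union>l. ball1 (smul3 l u))"

definition Dq :: "('a::zero \<times> 'a \<times> 'a) set" where
  "Dq = {(x, y, z). x \<noteq> 0 \<and> y \<noteq> 0 \<and> z \<noteq> 0 \<and> x \<noteq> y \<and> y \<noteq> z \<and> x \<noteq> z}"

definition Btil :: "'a::zero \<times> 'a \<times> 'a \<Rightarrow> ('a \<times> 'a \<times> 'a) set" where
  "Btil u = ball1 u \<inter> Dq"

definition Etil :: "'a::{zero,times} \<times> 'a \<times> 'a \<Rightarrow> ('a \<times> 'a \<times> 'a) set" where
  "Etil u = Eset u \<inter> Dq"

definition rho :: "'a::{finite,field} \<times> 'a \<times> 'a \<Rightarrow> 'a \<times> 'a \<times> 'a \<Rightarrow> nat" where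
  "rho u v = (if card (Etil u) = 0 \<or> card (Etil v) = 0 then 0
     else (\<Sum>\<mu>\<in>{\<mu>::'a. \<mu> \<noteq> 0}. card (Btil u \<inter> Btil (smul3 \<mu> v))))"

end

theory Submission
  imports Defs
begin

lemma hamming_le1:
  "hamming (x1,y1,z1) (x2,y2,z2) \<le> 1 \<longleftrightarrow>
     (x1=x2 \<and> y1=y2) \<or> (x1=x2 \<and> z1=z2) \<or> (y1=y2 \<and> z1=z2)"
proof -
  have S: "{i::nat. i < 3 \<and> comp3 (x1,y1,z1) i \<noteq> comp3 (x2,y2,z2) i}
     = (if x1 \<noteq> x2 then {0} else {}) \<union> (if y1 \<noteq> y2 then {1} else {}) \<union> (if z1 \<noteq> z2 then {2} else {})"
    by (auto simp: comp3_def split: if_splits)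
  show ?thesis unfolding hamming_def S by (auto split: if_splits)
qed

lemma hamming_le1':
  "hamming (x1,y1,z1) (x2,y2,z2) \<le> Suc 0 \<longleftrightarrow>
     (x1=x2 \<and> y1=y2) \<or> (x1=x2 \<and> z1=z2) \<or> (y1=y2 \<and> z1=z2)"
  using hamming_le1 by simp

lemma common_coord:
  fixes w u v :: "'a::field \<times> 'a \<times> 'a"
  assumes "w \<in> Btil u" "w \<in> Btil (smul3 \<mu> v)"
  shows "fst w = fst u \<and> fst w = \<mu> * fst v \<or>
         fst (snd w) = fst (snd u) \<and> fst (snd w) = \<mu> * fst (snd v) \<or>
         snd (snd w) = snd (snd u) \<and> snd (snd w) = \<mu> * snd (snd v)"
proof -
  obtain w1 w2 w3 where w: "w = (w1,w2,w3)" by (cases w) auto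
  obtain u1 u2 u3 where u: "u = (u1,u2,u3)" by (cases u) auto
  obtain v1 v2 v3 where v: "v = (v1,v2,v3)" by (cases v) auto
  show ?thesis using assms unfolding w u v Btil_def ball1_def smul3_def
    by (auto simp: hamming_le1 hamming_le1')
qed

theorem lemma13:
  fixes \<xi> :: "'a::{finite,field}"
    and a b c d e f :: int
    and u v :: "'a \<times> 'a \<times> 'a"
  assumes gen: "\<forall>x::'a. x \<noteq> 0 \<longrightarrow> (\<exists>n::nat. x = \<xi> ^ n)"
    and u_def: "u = (\<xi> powi a, \<xi> powi b, \<xi> powi c)"
    and v_def: "v = (\<xi> powi d, \<xi> powi e, \<xi> powi f)"
    and uD: "u \<in> Dq" and vD: "v \<in> Dq"
  shows "rho u v = (\<Sum>\<mu>\<in>{\<xi> powi (a - d), \<xi> powi (b - e), \<xi> powi (c - f)}.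
                      card (Btil u \<inter> Btil (smul3 \<mu> v)))"
proof -
  have xi: "\<xi> \<noteq> 0"
  proof
    assume "\<xi> = 0"
    then show False using uD unfolding u_def Dq_def
      by (auto simp: power_int_0_left_if split: if_splits)
  qed
  have Hu: "hamming u u = 0" by (simp add: hamming_def)
  have Hv: "hamming v v = 0" by (simp add: hamming_def)
  have "u \<in> Etil u"
    unfolding Etil_def Eset_def using uD Hu
    by (auto simp: ball1_def intro!: exI[of _ 1] simp: smul3_def split: prod.splits)
  hence cu: "card (Etil u) \<noteq> 0" by (auto simp: card_eq_0_iff)
  have "v \<in> Etil v"
    unfolding Etil_def Eset_def using vD Hv
    by (auto simp: ball1_def intro!: exI[of _ 1] simp: smul3_def split: prod.splits)
  hence cv: "card (Etil v) \<noteq> 0" by (auto simp: card_eq_0_iff)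
  let ?M = "{\<xi> powi (a - d), \<xi> powi (b - e), \<xi> powi (c - f)}"
  have Msub: "?M \<subseteq> {\<mu>. \<mu> \<noteq> 0}" using xi by auto
  have zero: "card (Btil u \<inter> Btil (smul3 \<mu> v)) = 0" if "\<mu> \<in> {\<mu>. \<mu> \<noteq> 0} - ?M" for \<mu>
  proof -
    have "Btil u \<inter> Btil (smul3 \<mu> v) = {}"
    proof (rule ccontr)
      assume "Btil u \<inter> Btil (smul3 \<mu> v) \<noteq> {}"
      then obtain w where "w \<in> Btil u" "w \<in> Btil (smul3 \<mu> v)" by blast
      from common_coord[OF this] have
        "\<xi> powi a = \<mu> * \<xi> powi d \<or> \<xi> powi b = \<mu> * \<xi> powi e \<or> \<xi> powi c = \<mu> * \<xi> powi f"
        unfolding u_def v_def by auto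
      hence "\<mu> = \<xi> powi a / \<xi> powi d \<or> \<mu> = \<xi> powi b / \<xi> powi e \<or> \<mu> = \<xi> powi c / \<xi> powi f"
        using xi by (auto simp: field_simps)
      thus False using that xi by (auto simp: power_int_diff)
    qed
    thus ?thesis by simp
  qed
  have "rho u v = (\<Sum>\<mu>\<in>{\<mu>::'a. \<mu> \<noteq> 0}. card (Btil u \<inter> Btil (smul3 \<mu> v)))"
    using cu cv by (simp add: rho_def)
  also have "\<dots> = (\<Sum>\<mu>\<in>?M. card (Btil u \<inter> Btil (smul3 \<mu> v)))"
    by (rule sum.mono_neutral_right[OF _ Msub]) (use zero in auto)
  finally show ?thesis .
qed

end
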